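(* Let $b\ge 0$ and $h\ge 2b+1$ be integers, let $H$ be a set of $h$ vertices, and fix $\beta>0$. Let $M^1,M^2,M^3$ be any three transition matrices (as defined in the context). Then the product $M^1M^2M^3$ is a scrambling matrix, i.e. it has at least one column all of whose entries are strictly positive.
   Context: A reduced graph on $H$ is a directed graph obtained from the complete directed graph (without self-loops) on $H$ by deleting, for each vertex, an arbitrary set of $b$ of its incoming edges. A transition matrix is an $h\times h$ row-stochastic matrix $M$ with nonnegative real entries, rows and columns indexed by $H$, for which there is a reduced graph $R$ on $H$ such that $M_{ij}\ge\beta$ whenever $j=i$ or $(j,i)$ is an edge of $R$. (This models one phase of $D$ iterations of the Relay-IABC protocol: honest node $i$'s new state is a weighted combination, with weights at least $\beta$, of its own state and the states of its in-neighbors in the reduced graph remaining after trimming.) *)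

theory Defs
  imports Complex_Main
begin

text \<open>Matrices with rows and columns indexed by a finite set H are functions
  'a => 'a => real (only entries on H x H are relevant).\<close>

definition mat_mult :: "'a set \<Rightarrow> ('a \<Rightarrow> 'a \<Rightarrow> real) \<Rightarrow> ('a \<Rightarrow> 'a \<Rightarrow> real) \<Rightarrow> ('a \<Rightarrow> 'a \<Rightarrow> real)" where
  "mat_mult H M N = (\<lambda>i j. \<Sum>k\<in>H. M i k * N k j)"

text \<open>A reduced graph on H: from the complete digraph without self-loops, delete for
  each vertex i a set D i of exactly b incoming edges (edges (j,i) with j in D i).
  An edge (j,i) goes from j to i.\<close>

definition reduced_graph :: "'a set \<Rightarrow> nat \<Rightarrow> ('a \<times> 'a) set \<Rightarrow> bool" where
  "reduced_graph H b R \<longleftrightarrow>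
     (\<exists>D. (\<forall>i\<in>H. D i \<subseteq> H - {i} \<and> card (D i) = b) \<and>
          R = {(j, i). i \<in> H \<and> j \<in> H \<and> j \<noteq> i \<and> j \<notin> D i})"

definition row_stochastic :: "'a set \<Rightarrow> ('a \<Rightarrow> 'a \<Rightarrow> real) \<Rightarrow> bool" where
  "row_stochastic H M \<longleftrightarrow>
     (\<forall>i\<in>H. \<forall>j\<in>H. 0 \<le> M i j) \<and> (\<forall>i\<in>H. (\<Sum>j\<in>H. M i j) = 1)"

definition transition_matrix :: "'a set \<Rightarrow> nat \<Rightarrow> real \<Rightarrow> ('a \<Rightarrow> 'a \<Rightarrow> real) \<Rightarrow> bool" where
  "transition_matrix H b \<beta> M \<longleftrightarrow>
     row_stochastic H M \<and>
     (\<exists>R. reduced_graph H b R \<and>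
          (\<forall>i\<in>H. \<forall>j\<in>H. (j = i \<or> (j, i) \<in> R) \<longrightarrow> \<beta> \<le> M i j))"

definition scrambling :: "'a set \<Rightarrow> ('a \<Rightarrow> 'a \<Rightarrow> real) \<Rightarrow> bool" where
  "scrambling H M \<longleftrightarrow> (\<exists>j\<in>H. \<forall>i\<in>H. 0 < M i j)"

end

theory Submission
  imports Defs
begin

lemma tm_facts:
  assumes "finite H" "transition_matrix H b \<beta> M"
  shows "\<forall>i\<in>H. \<forall>j\<in>H. 0 \<le> M i j"
    and "\<forall>i\<in>H. M i i \<ge> \<beta>"
    and "\<forall>i\<in>H. card {j\<in>H. \<beta> \<le> M i j} \<ge> card H - b"
proof -
  show "\<forall>i\<in>H. \<forall>j\<in>H. 0 \<le> M i j" using assms(2)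
    unfolding transition_matrix_def row_stochastic_def by blast
  show "\<forall>i\<in>H. M i i \<ge> \<beta>" using assms(2)
    unfolding transition_matrix_def by blast
  obtain R where R: "reduced_graph H b R"
    and Rb: "\<forall>i\<in>H. \<forall>j\<in>H. (j = i \<or> (j, i) \<in> R) \<longrightarrow> \<beta> \<le> M i j"
    using assms(2) unfolding transition_matrix_def by blast
  obtain D where D: "\<forall>i\<in>H. D i \<subseteq> H - {i} \<and> card (D i) = b"
    and Rd: "R = {(j, i). i \<in> H \<and> j \<in> H \<and> j \<noteq> i \<and> j \<notin> D i}"
    using R unfolding reduced_graph_def by blast
  show "\<forall>i\<in>H. card {j\<in>H. \<beta> \<le> M i j} \<ge> card H - b"
  proof
    fix i assume i: "i \<in> H"
    have sub: "H - D i \<subseteq> {j\<in>H. \<beta> \<le> M i j}"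
      using Rb i D unfolding Rd by auto
    have "card (H - D i) = card H - b"
      using D i assms(1) by (metis Diff_subset card_Diff_subset finite_subset subset_trans)
    then show "card {j\<in>H. \<beta> \<le> M i j} \<ge> card H - b"
      using sub assms(1) by (metis (no_types, lifting) card_mono finite_subset mem_Collect_eq subsetI)
  qed
qed

lemma inter_ne:
  assumes "finite H" "A \<subseteq> H" "B \<subseteq> H" "card A + card B > card H"
  shows "A \<inter> B \<noteq> {}"
proof
  assume "A \<inter> B = {}"
  then have "card (A \<union> B) = card A + card B"
    using assms by (meson card_Un_disjoint finite_subset)
  moreover have "card (A \<union> B) \<le> card H" using assms by (simp add: card_mono)
  ultimately show False using assms by simp
qed

lemma double_count:
  assumes "finite H"
  shows "(\<Sum>j\<in>H. card {k\<in>H. P k j}) = (\<Sum>k\<in>H. card {j\<in>H. P k j})"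
proof -
  have "(\<Sum>j\<in>H. card {k\<in>H. P k j}) = (\<Sum>j\<in>H. \<Sum>k\<in>H. if P k j then 1 else 0)"
    using assms by (simp add: sum.If_cases Int_def)
  also have "\<dots> = (\<Sum>k\<in>H. \<Sum>j\<in>H. if P k j then 1 else 0)"
    by (rule sum.swap)
  also have "\<dots> = (\<Sum>k\<in>H. card {j\<in>H. P k j})"
    using assms by (simp add: sum.If_cases Int_def)
  finally show ?thesis .
qed

theorem theorem2:
  fixes H :: "'a set" and b h :: nat and \<beta> :: real
    and M1 M2 M3 :: "'a \<Rightarrow> 'a \<Rightarrow> real"
  assumes "finite H" and "card H = h" and "h \<ge> 2 * b + 1"
    and "\<beta> > 0"
    and "transition_matrix H b \<beta> M1"
    and "transition_matrix H b \<beta> M2"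
    and "transition_matrix H b \<beta> M3"
  shows "scrambling H (mat_mult H (mat_mult H M1 M2) M3)"
proof -
  note f1 = tm_facts[OF assms(1) assms(5)]
  note f2 = tm_facts[OF assms(1) assms(6)]
  note f3 = tm_facts[OF assms(1) assms(7)]
  define Out where "Out j = {k\<in>H. \<beta> \<le> M2 k j}" for j
  have "\<exists>j\<in>H. card (Out j) \<ge> b + 1"
  proof (rule ccontr)
    assume "\<not> ?thesis"
    then have le: "\<forall>j\<in>H. card (Out j) \<le> b" by auto
    have "(\<Sum>j\<in>H. card (Out j)) \<le> (\<Sum>j\<in>H. b)" using le by (intro sum_mono) auto
    also have "\<dots> = h * b" using assms(2) by simp
    finally have a: "(\<Sum>j\<in>H. card (Out j)) \<le> h * b" .
    have "(\<Sum>k\<in>H. h - b) \<le> (\<Sum>k\<in>H. card {j\<in>H. \<beta> \<le> M2 k j})"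
      using f2(3) assms(2) by (intro sum_mono) auto
    then have "h * (h - b) \<le> (\<Sum>j\<in>H. card (Out j))"
      unfolding Out_def using double_count[OF assms(1), of "\<lambda>k j. \<beta> \<le> M2 k j"] assms(2) by simp
    with a have "h * (h - b) \<le> h * b" by linarith
    moreover have "h * b < h * (h - b)" using assms(3) by simp
    ultimately show False by simp
  qed
  then obtain j where j: "j \<in> H" "card (Out j) \<ge> b + 1" by blast
  let ?P = "mat_mult H M1 M2"
  have nn: "\<forall>i\<in>H. \<forall>k\<in>H. 0 \<le> ?P i k"
    unfolding mat_mult_def using f1(1) f2(1) by (auto intro!: sum_nonneg)
  have pos: "\<forall>i\<in>H. 0 < ?P i j"
  proof
    fix i assume i: "i \<in> H"
    have "{k\<in>H. \<beta> \<le> M1 i k} \<inter> Out j \<noteq> {}"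
      apply (rule inter_ne[OF assms(1)])
      using f1(3) i j assms(2,3) by (auto simp: Out_def)
    then obtain k where k: "k \<in> H" "\<beta> \<le> M1 i k" "\<beta> \<le> M2 k j" by (auto simp: Out_def)
    have "0 < M1 i k * M2 k j" using k assms(4) by (smt (verit) mult_pos_pos)
    also have "\<dots> \<le> (\<Sum>k\<in>H. M1 i k * M2 k j)"
      by (rule member_le_sum) (use k f1(1) f2(1) i j assms(1) in auto)
    finally show "0 < ?P i j" unfolding mat_mult_def .
  qed
  show ?thesis unfolding scrambling_def
  proof (intro bexI ballI)
    fix i assume i: "i \<in> H"
    have "0 < ?P i j * M3 j j" using pos i f3(2) j assms(4) by (smt (verit) mult_pos_pos)
    also have "\<dots> \<le> (\<Sum>k\<in>H. ?P i k * M3 k j)"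
      by (rule member_le_sum[where f="\<lambda>k. ?P i k * M3 k j"]) (use nn f3(1) i j assms(1) in auto)
    finally show "0 < mat_mult H ?P M3 i j" unfolding mat_mult_def .
  qed (rule j(1))
qed

end
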